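(* Let $k\ge 6$ be an integer, and let $(a_n)$ be a sequence satisfying $a_n=a_{n-1}+a_{n-k}$ for all sufficiently large $n$. Let $r_1,\ldots,r_k$ be the complex roots of the characteristic polynomial $x^k-x^{k-1}-1$, ordered so that $|r_1|\ge|r_2|\ge\cdots\ge|r_k|$. Then $|r_2|>1$ and $r_2$ is not real. *)

theory Defs
  imports "HOL-Analysis.Analysis" "HOL-Computational_Algebra.Computational_Algebra"
begin

definition char_poly :: "nat \<Rightarrow> complex poly" where
  "char_poly k = monom 1 k - monom 1 (k - 1) - 1"

end

theory Submission
  imports Defs
begin

lemma poly_char:
  assumes "k \<ge> 1"
  shows "poly (char_poly k) z = z^(k-1)*(z-1) - 1"
proof -
  obtain n where k: "k = Suc n" using assms by (cases k) auto
  show ?thesis unfolding char_poly_def k by (simp add: poly_monom algebra_simps)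
qed

lemma char_ne0: assumes "k \<ge> 1" shows "char_poly k \<noteq> 0"
proof
  assume "char_poly k = 0"
  then have "poly (char_poly k) 0 = (0::complex)" by simp
  then show False using poly_char[OF assms, of 0] by (cases "k - 1") auto
qed

lemma mono_h:
  fixes a b :: real
  assumes "1 \<le> a" "a < b"
  shows "a^n*(a-1) < b^n*(b-1)"
proof -
  have "a^n \<le> b^n" using assms by (intro power_mono) auto
  moreover have "0 < b^n" using assms by auto
  ultimately have "a^n*(a-1) \<le> b^n*(a-1)" using assms by (intro mult_right_mono) auto
  also have "\<dots> < b^n*(b-1)" using assms \<open>0 < b^n\<close> by (intro mult_strict_left_mono) auto
  finally show ?thesis .
qed

lemma rho_ex:
  shows "\<exists>\<rho>::real. \<rho> > 1 \<and> \<rho>^n*(\<rho>-1) = 1"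
proof -
  have "\<exists>x. 1 \<le> x \<and> x \<le> 2 \<and> (\<lambda>x::real. x^n*(x-1)) x = 1"
    by (rule IVT') (auto intro!: continuous_intros simp: one_le_power)
  then obtain x :: real where "1 \<le> x" "x \<le> 2" "x^n*(x-1) = 1" by blast
  moreover have "x \<noteq> 1" using \<open>x^n*(x-1) = 1\<close> by auto
  ultimately show ?thesis by (intro exI[of _ x]) auto
qed

lemma real_root_unique:
  fixes x \<rho> :: real
  assumes "\<rho> > 1" "\<rho>^n*(\<rho>-1) = 1" "\<bar>x\<bar> > 1" "x^n*(x-1) = 1"
  shows "x = \<rho>"
proof (cases "x < -1")
  case True
  have "1 \<le> \<bar>x\<bar>^n" using assms by (simp add: one_le_power)
  moreover have "2 \<le> \<bar>x-1\<bar>" using True by auto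
  ultimately have "1 * 2 \<le> \<bar>x\<bar>^n * \<bar>x-1\<bar>"
    by (intro mult_mono) auto
  then have "2 \<le> \<bar>x^n*(x-1)\<bar>" by (simp add: abs_mult power_abs)
  then show ?thesis using assms by simp
next
  case False
  then have x1: "x > 1" using assms by auto
  show ?thesis
  proof (rule ccontr)
    assume "x \<noteq> \<rho>"
    then consider "x < \<rho>" | "\<rho> < x" by linarith
    then show False
    proof cases
      case 1 then show False using mono_h[of x \<rho> n] x1 assms by auto
    next
      case 2 then show False using mono_h[of \<rho> x n] assms by auto
    qed
  qed
qed

lemma dominant:
  fixes z :: complex and \<rho> :: real
  assumes "\<rho> > 1" "\<rho>^n*(\<rho>-1) = 1" "z^n*(z-1) = 1" "cmod z \<ge> \<rho>"
  shows "z = complex_of_real \<rho>"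
proof -
  define a where "a = cmod z"
  have e: "a^n * cmod (z-1) = 1"
    using arg_cong[OF assms(3), of cmod] by (simp add: a_def norm_mult norm_power)
  have d: "cmod (z-1) \<ge> a - 1" unfolding a_def using norm_triangle_ineq2[of z 1] by simp
  have pn: "\<rho>^n > 0" using assms by simp
  have aeq: "a = \<rho>"
  proof (rule ccontr)
    assume "a \<noteq> \<rho>"
    then have "a > \<rho>" using assms a_def by auto
    then have "a^n \<ge> \<rho>^n" using assms by (intro power_mono) auto
    moreover have "cmod (z-1) > \<rho> - 1" using d \<open>a > \<rho>\<close> by linarith
    ultimately have "a^n * cmod (z-1) > \<rho>^n * (\<rho> - 1)"
      using pn assms(1) by (intro mult_le_less_imp_less) auto
    then show False using e assms by simp
  qed
  have "\<rho>^n * cmod (z-1) = \<rho>^n * (\<rho> - 1)" using e aeq assms by simp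
  then have m1: "cmod (z-1) = \<rho> - 1" using pn assms(1) by simp
  have q1: "(Re z - 1)^2 + (Im z)^2 = (\<rho>-1)^2"
    using arg_cong[OF m1, of "\<lambda>t. t^2"] by (simp add: cmod_power2)
  have q2: "(Re z)^2 + (Im z)^2 = \<rho>^2"
    using arg_cong[OF aeq[unfolded a_def], of "\<lambda>t. t^2"] by (simp add: cmod_power2)
  have "(Re z - 1)^2 = (Re z)^2 - 2 * Re z + 1" by (simp add: power2_eq_square algebra_simps)
  moreover have "(\<rho> - 1)^2 = \<rho>^2 - 2 * \<rho> + 1" by (simp add: power2_eq_square algebra_simps)
  ultimately have "Re z = \<rho>" using q1 q2 by linarith
  then have "Im z = 0" using q2 by simp
  then show ?thesis using \<open>Re z = \<rho>\<close> by (simp add: complex_eq_iff)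
qed

lemma nonreal_root:
  fixes n :: nat
  assumes n5: "n \<ge> 5"
  shows "\<exists>z::complex. z^n*(z-1) = 1 \<and> cmod z > 1 \<and> Im z \<noteq> 0"
proof -
  obtain \<rho> :: real where \<rho>: "\<rho> > 1" "\<rho>^n*(\<rho>-1) = 1" using rho_ex by blast
  define s where "s = (\<lambda>R::real. 1 / R^n)"
  define x where "x = (\<lambda>R. (R^2 + 1 - (s R)^2) / 2)"
  define g where "g = (\<lambda>R. real n * arccos (x R / R) + arccos ((x R - 1) / s R))"
  have sbnd: "0 < s R \<and> s R \<le> 1 \<and> R - 1 \<le> s R" if R: "1 \<le> R" "R \<le> \<rho>" for R
  proof -
    have Rn: "R^n \<ge> 1" using R by (simp add: one_le_power)
    have "R^n * (R - 1) \<le> 1"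
    proof (cases "R = \<rho>")
      case True then show ?thesis using \<rho> by simp
    next
      case False then show ?thesis using mono_h[of R \<rho> n] R \<rho> by auto
    qed
    then have "(R - 1) * R^n \<le> 1" by (simp add: mult.commute)
    then have "R - 1 \<le> 1 / R^n" using Rn by (subst pos_le_divide_eq) auto
    then show ?thesis using Rn unfolding s_def by auto
  qed
  have key: "-1 \<le> x R / R \<and> x R / R \<le> 1 \<and> -1 \<le> (x R - 1) / s R \<and> (x R - 1) / s R \<le> 1"
    if R: "1 \<le> R" "R \<le> \<rho>" for R
  proof -
    define S where "S = s R"
    have S: "0 < S" "S \<le> 1" "R - 1 \<le> S" using sbnd[OF R] S_def by auto
    have X: "2 * x R = R^2 + 1 - S^2" unfolding x_def S_def by simp
    have "(R-1)^2 \<le> S^2" using S R by (intro power_mono) auto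
    then have a1: "x R \<le> R" using X by (simp add: power2_eq_square algebra_simps)
    have "S^2 \<le> (R+1)^2" using S R by (intro power_mono) auto
    then have a2: "- R \<le> x R" using X by (simp add: power2_eq_square algebra_simps)
    have "R^2 \<le> (S+1)^2" using S R by (intro power_mono) auto
    then have a3: "x R - 1 \<le> S" using X by (simp add: power2_eq_square algebra_simps)
    have "(1 - S)^2 \<le> R^2" using S R by (intro power_mono) auto
    then have a4: "- S \<le> x R - 1" using X by (simp add: power2_eq_square algebra_simps)
    show ?thesis using a1 a2 a3 a4 S R unfolding S_def[symmetric]
      by (simp add: field_simps)
  qed
  have cs: "continuous_on {1..\<rho>} s" unfolding s_def
    by (intro continuous_intros) auto
  have cx: "continuous_on {1..\<rho>} x" unfolding x_def
    by (intro continuous_intros cs) auto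
  have cg: "continuous_on {1..\<rho>} g" unfolding g_def
    using key sbnd by (intro continuous_intros cs cx) (auto, metis less_irrefl)
  have sr: "s \<rho> = \<rho> - 1" unfolding s_def using \<rho> by (simp add: field_simps)
  have xr: "x \<rho> = \<rho>" unfolding x_def sr by (simp add: power2_eq_square algebra_simps)
  have g\<rho>: "g \<rho> = 0" unfolding g_def xr sr using \<rho> by simp
  have g1: "g 1 = real n * (pi/3) + (pi - pi/3)" unfolding g_def x_def s_def
    by (simp add: arccos_minus)
  have "real n * (pi/3) \<ge> 5 * (pi/3)" using n5 by (intro mult_right_mono) auto
  then have g1b: "g 1 > 2 * pi" unfolding g1 using pi_gt_zero by linarith
  obtain R where R: "1 \<le> R" "R \<le> \<rho>" "g R = 2 * pi"
    using IVT2'[of g \<rho> "2*pi" 1, OF _ _ _ cg] g\<rho> g1b \<rho> by auto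
  have R1: "R > 1" using R g1b by (cases "R = 1") auto
  define S where "S = s R"
  define X where "X = x R"
  define Y where "Y = sqrt (R^2 - X^2)"
  define \<alpha> where "\<alpha> = arccos (X / R)"
  define \<beta> where "\<beta> = arccos ((X - 1) / S)"
  have kR: "-1 \<le> X / R" "X / R \<le> 1" "-1 \<le> (X - 1) / S" "(X - 1) / S \<le> 1"
    using key[OF R(1,2)] unfolding X_def S_def by auto
  have S0: "S > 0" using sbnd[OF R(1,2)] S_def by auto
  have XS: "2 * X = R^2 + 1 - S^2" unfolding X_def x_def S_def by simp
  have RnS: "R^n * S = 1" unfolding S_def s_def using R1 by simp
  have "S^2 - (X-1)^2 = R^2 - X^2" using XS by (simp add: power2_eq_square algebra_simps)
  have z1: "rcis R \<alpha> = Complex X Y"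
  proof -
    have "sin \<alpha> = sqrt (1 - (X/R)^2)" unfolding \<alpha>_def
      by (rule sin_arccos_abs) (use kR(1,2) in auto)
    then have "R * sin \<alpha> = sqrt (R^2) * sqrt (1 - (X/R)^2)"
      using R1 by simp
    also have "\<dots> = sqrt (R^2 * (1 - (X/R)^2))" by (simp add: real_sqrt_mult)
    also have "R^2 * (1 - (X/R)^2) = R^2 - X^2" using R1 by (simp add: field_simps power2_eq_square)
    finally have "R * sin \<alpha> = Y" unfolding Y_def .
    moreover have "R * cos \<alpha> = X" unfolding \<alpha>_def using kR R1 by simp
    ultimately show ?thesis by (simp add: rcis_def cis.ctr complex_eq_iff)
  qed
  have z2: "rcis S \<beta> = Complex X Y - 1"
  proof -
    have "sin \<beta> = sqrt (1 - ((X-1)/S)^2)" unfolding \<beta>_def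
      by (rule sin_arccos_abs) (use kR(3,4) in auto)
    then have "S * sin \<beta> = sqrt (S^2) * sqrt (1 - ((X-1)/S)^2)"
      using S0 by simp
    also have "\<dots> = sqrt (S^2 * (1 - ((X-1)/S)^2))" by (simp add: real_sqrt_mult)
    also have "S^2 * (1 - ((X-1)/S)^2) = S^2 - (X-1)^2" using S0 by (simp add: field_simps power2_eq_square)
    also have "\<dots> = R^2 - X^2" by fact
    finally have "S * sin \<beta> = Y" unfolding Y_def .
    moreover have "S * cos \<beta> = X - 1" unfolding \<beta>_def using kR S0 by simp
    ultimately show ?thesis by (simp add: rcis_def cis.ctr complex_eq_iff)
  qed
  define z where "z = Complex X Y"
  have ab: "real n * \<alpha> + \<beta> = 2 * pi" using R(3) unfolding g_def \<alpha>_def \<beta>_def X_def S_def by simp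
  have "z^n * (z - 1) = rcis (R^n) (real n * \<alpha>) * rcis S \<beta>"
  proof -
    have "z = rcis R \<alpha>" "z - 1 = rcis S \<beta>" using z1 z2 z_def by auto
    then show ?thesis by (simp add: DeMoivre2)
  qed
  also have "\<dots> = rcis 1 (2 * pi)" by (simp add: rcis_mult RnS ab)
  also have "\<dots> = 1" by (simp add: rcis_def)
  finally have zr: "z^n * (z - 1) = 1" .
  have zm: "cmod z = R" unfolding z_def z1[symmetric] using R1 by simp
  have "Im z \<noteq> 0"
  proof
    assume "Im z = 0"
    then have zX: "z = complex_of_real X" unfolding z_def by (simp add: complex_eq_iff)
    have "complex_of_real (X^n * (X - 1)) = 1" using zr unfolding zX by simp
    then have "X^n * (X - 1) = 1" using of_real_eq_1_iff by blast
    moreover have "\<bar>X\<bar> = R" using zm zX by simp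
    ultimately have "X = \<rho>" using real_root_unique[OF \<rho>, of X] R1 by auto
    then have "R = \<rho>" using \<open>\<bar>X\<bar> = R\<close> \<rho> by simp
    then show False using R(3) g\<rho> pi_gt_zero by simp
  qed
  then show ?thesis using zr zm R1 by blast
qed

theorem mainTheorem6:
  fixes k :: nat and a :: "nat \<Rightarrow> complex" and r :: "nat \<Rightarrow> complex"
  assumes "k \<ge> 6"
    and "\<exists>N. \<forall>n\<ge>N. a n = a (n - 1) + a (n - k)"
    and "mset (map r [1..<k+1]) = proots (char_poly k)"
    and "\<forall>i j. 1 \<le> i \<longrightarrow> i \<le> j \<longrightarrow> j \<le> k \<longrightarrow> cmod (r j) \<le> cmod (r i)"
  shows "cmod (r 2) > 1 \<and> r 2 \<notin> \<real>"
proof -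
  define n where "n = k - 1"
  define f where "f = char_poly k"
  have k1: "k \<ge> 1" and n5: "n \<ge> 5" using assms(1) n_def by auto
  have f0: "f \<noteq> 0" unfolding f_def using char_ne0[OF k1] .
  have root_iff: "poly f z = 0 \<longleftrightarrow> z^n*(z-1) = 1" for z
    unfolding f_def n_def poly_char[OF k1] by auto
  have setr: "set_mset (proots f) = r ` {1..k}"
  proof -
    have "set_mset (proots f) = set (map r [1..<k+1])" using assms(3) f_def
      by (metis set_mset_mset)
    also have "\<dots> = r ` {1..k}" by auto
    finally show ?thesis .
  qed
  have inlist: "\<exists>i. 1 \<le> i \<and> i \<le> k \<and> r i = z" if "z^n*(z-1) = 1" for z
  proof -
    have "z \<in> set_mset (proots f)" using f0 that root_iff by simp
    then show ?thesis using setr by auto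
  qed
  have isroot: "(r i)^n*(r i - 1) = 1" if "1 \<le> i" "i \<le> k" for i
  proof -
    have "r i \<in> set_mset (proots f)" using setr that by auto
    then show ?thesis using f0 root_iff by simp
  qed
  have mono: "cmod (r j) \<le> cmod (r i)" if "1 \<le> i" "i \<le> j" "j \<le> k" for i j
    using assms(4) that by blast
  obtain \<rho> :: real where \<rho>: "\<rho> > 1" "\<rho>^n*(\<rho>-1) = 1" using rho_ex by blast
  obtain w :: complex where w: "w^n*(w-1) = 1" "cmod w > 1" "Im w \<noteq> 0"
    using nonreal_root[OF n5] by blast
  have wc: "(cnj w)^n*(cnj w - 1) = 1"
    using arg_cong[OF w(1), of cnj] by simp
  have part1: "cmod (r 2) > 1"
  proof (rule ccontr)
    assume "\<not> cmod (r 2) > 1"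
    then have le: "cmod (r 2) \<le> 1" by simp
    have one: "v = r 1" if vr: "v^n*(v-1) = 1" and vm: "cmod v > 1" for v
    proof -
      obtain i where i: "1 \<le> i" "i \<le> k" "r i = v" using inlist[OF vr] by blast
      have "i = 1"
      proof (rule ccontr)
        assume "i \<noteq> 1"
        then have "cmod (r i) \<le> cmod (r 2)" using i mono[of 2 i] by auto
        then show False using le vm i by auto
      qed
      then show ?thesis using i by simp
    qed
    have "w = cnj w" using one[OF w(1,2)] one[OF wc] w(2) by simp
    then show False using w(3) by (simp add: complex_eq_iff)
  qed
  have part2: "r 2 \<notin> \<real>"
  proof
    assume "r 2 \<in> \<real>"
    then obtain t where t: "r 2 = complex_of_real t" by (auto elim: Reals_cases)
    have "complex_of_real (t^n*(t-1)) = 1" using isroot[of 2] assms(1) t by simp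
    then have "t^n*(t-1) = 1" using of_real_eq_1_iff by blast
    moreover have "\<bar>t\<bar> > 1" using part1 t by simp
    ultimately have t\<rho>: "t = \<rho>" using real_root_unique[OF \<rho>] by blast
    have "cmod (r 1) \<ge> \<rho>" using mono[of 1 2] assms(1) t t\<rho> by simp
    then have r1: "r 1 = complex_of_real \<rho>" using dominant[OF \<rho> isroot[of 1]] assms(1) by simp
    have r2: "r 2 = complex_of_real \<rho>" using t t\<rho> by simp
    have u1: "[1..<k+1] = 1 # [Suc 1..<k+1]" using assms(1) by (intro upt_conv_Cons) simp
    have u2: "[Suc 1..<k+1] = Suc 1 # [Suc (Suc 1)..<k+1]" using assms(1) by (intro upt_conv_Cons) simp
    have ul: "[1..<k+1] = 1 # 2 # [3..<k+1]" unfolding u1 u2 by (simp only: numeral_2_eq_2 numeral_3_eq_3 One_nat_def)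
    have "count (mset (map r [1..<k+1])) (complex_of_real \<rho>) \<ge> 2"
      unfolding ul using r1 r2 by simp
    then have ord2: "order (complex_of_real \<rho>) f \<ge> 2" using assms(3) f0 f_def by simp
    have "poly f (complex_of_real \<rho>) = 0" using r1 isroot[of 1] root_iff assms(1) by auto
    then have "order (complex_of_real \<rho>) f = Suc (order (complex_of_real \<rho>) (pderiv f))"
      using order_pderiv f0 by blast
    then have "order (complex_of_real \<rho>) (pderiv f) \<noteq> 0" using ord2 by simp
    then have pd0: "poly (pderiv f) (complex_of_real \<rho>) = 0" using order_root by blast
    define m where "m = k - 2"
    have m: "k = Suc (Suc m)" using assms(1) m_def by simp
    have "poly (pderiv f) z = of_nat k * z^(Suc m) - of_nat (Suc m) * z^m" for z :: complex
      unfolding f_def char_poly_def m by (simp add: pderiv_diff pderiv_monom poly_monom)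
    then have "of_nat k * (complex_of_real \<rho>)^(Suc m) - of_nat (Suc m) * (complex_of_real \<rho>)^m = 0"
      using pd0 by simp
    then have "complex_of_real (\<rho>^m * (real k * \<rho> - real (Suc m))) = 0"
      by (simp add: algebra_simps)
    then have "\<rho>^m * (real k * \<rho> - real (Suc m)) = 0" using of_real_eq_0_iff by blast
    moreover have "\<rho>^m > 0" using \<rho> by simp
    moreover have "real k * \<rho> > real (Suc m)"
    proof -
      have "real k * \<rho> > real k * 1" using mult_strict_left_mono[of 1 \<rho> "real k"] \<rho> m by simp
      moreover have "real k = real (Suc m) + 1" using m by simp
      ultimately show ?thesis by linarith
    qed
    ultimately show False by simp
  qed
  show ?thesis using part1 part2 by blast
qed

end
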